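(* For $\alpha,\alpha'\in\mathbb R/2\pi\mathbb Z$, the maps $\mathbb Z[i]\to\mathbb Z[i]$, $z\mapsto[ze^{i\alpha}]$ and $z\mapsto[ze^{i\alpha'}]$, are equal if and only if $\alpha=\alpha'$.
   Context: Identify $\mathbb Z^2$ with $\mathbb Z[i]$. For real $x$, $[x]=\lfloor x+\tfrac12\rfloor$, and for $w\in\mathbb C$, $[w]=[\Re w]+i[\Im w]$; the map $z\mapsto[ze^{i\alpha}]$ is the discretized rotation of angle $\alpha$. *)

theory Defs
  imports "HOL-Analysis.Analysis"
begin

definition rnd :: "real \<Rightarrow> int" where
  "rnd x = \<lfloor>x + 1/2\<rfloor>"

definition crnd :: "complex \<Rightarrow> complex" where
  "crnd w = Complex (of_int (rnd (Re w))) (of_int (rnd (Im w)))"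

definition gauss_ints :: "complex set" where
  "gauss_ints = {z. Re z \<in> \<int> \<and> Im z \<in> \<int>}"

definition drot :: "real \<Rightarrow> complex \<Rightarrow> complex" where
  "drot \<alpha> z = crnd (z * cis \<alpha>)"

end

theory Submission
  imports Defs
begin

lemma rnd_close: "rnd x = rnd y \<Longrightarrow> \<bar>x - y\<bar> < 1"
  unfolding rnd_def by linarith

lemma eq_from_scaled:
  fixes a b :: real
  assumes h: "\<And>n::nat. \<bar>real n * a - real n * b\<bar> < 1"
  shows "a = b"
proof (rule ccontr)
  assume "a \<noteq> b"
  then have p: "\<bar>a - b\<bar> > 0" by simp
  obtain n :: nat where "1 < real n * \<bar>a - b\<bar>"
    using reals_Archimedean3[OF p] by blast
  moreover have "\<bar>real n * a - real n * b\<bar> = real n * \<bar>a - b\<bar>"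
    by (simp add: abs_mult right_diff_distrib[symmetric])
  ultimately show False using h[of n] by linarith
qed

lemma of_nat_gauss: "(of_nat n :: complex) \<in> gauss_ints"
  unfolding gauss_ints_def by simp

theorem mainTheorem9:
  fixes \<alpha> \<alpha>' :: real
  shows "(\<forall>z\<in>gauss_ints. drot \<alpha> z = drot \<alpha>' z) \<longleftrightarrow>
         (\<exists>k::int. \<alpha>' = \<alpha> + 2 * pi * of_int k)"
proof
  assume H: "\<forall>z\<in>gauss_ints. drot \<alpha> z = drot \<alpha>' z"
  have R: "rnd (real n * cos \<alpha>) = rnd (real n * cos \<alpha>') \<and> rnd (real n * sin \<alpha>) = rnd (real n * sin \<alpha>')" for n :: nat
  proof -
    have "drot \<alpha> (of_nat n) = drot \<alpha>' (of_nat n)" using H of_nat_gauss by blast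
    then show ?thesis unfolding drot_def crnd_def by (simp add: complex_eq_iff)
  qed
  have "cos \<alpha> = cos \<alpha>'" by (rule eq_from_scaled) (use R rnd_close in blast)
  moreover have "sin \<alpha> = sin \<alpha>'" by (rule eq_from_scaled) (use R rnd_close in blast)
  ultimately show "\<exists>k::int. \<alpha>' = \<alpha> + 2 * pi * of_int k"
    using sin_cos_eq_iff[of \<alpha>' \<alpha>] by simp
next
  assume "\<exists>k::int. \<alpha>' = \<alpha> + 2 * pi * of_int k"
  then obtain k :: int where k: "\<alpha>' = \<alpha> + 2 * pi * of_int k" by blast
  have "cis \<alpha>' = cis \<alpha> * cis (2 * pi * of_int k)" by (simp only: k cis_mult)
  also have "\<dots> = cis \<alpha>" by (metis Ints_of_int cis_multiple_2pi mult_1_right)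
  finally show "\<forall>z\<in>gauss_ints. drot \<alpha> z = drot \<alpha>' z" unfolding drot_def by simp
qed

end
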